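(* Let $n\ge 2$. The $\{2\}$-limit set $\Lambda_{\mathrm{Iso}_2}$ of $\rho_n(\mathrm{SL}(2,\mathbb C))<\mathrm{Sp}(2n,\mathbb R)$ is maximally antipodal in $\mathrm{Iso}_2(\mathbb R^{2n},\omega)$, and the $\Theta_{\rm even}$-limit set $\Lambda_{\rm even}\subset\mathcal F_{\rm even}$ of $\rho_n(\mathrm{SL}(2,\mathbb C))$ is maximally antipodal in $\mathcal F_{\rm even}$.
   Context: $\omega(x,y)=x^TJy$ with $Je_i=(-1)^ie_{2n-i+1}$; $\mathrm{Sp}(2n,\mathbb R)$ is its symmetry group. $\mathrm{Iso}_2(\mathbb R^{2n},\omega)$ is the space of $\omega$-isotropic 2-planes, with $V,W$ antipodal iff $V\oplus W^{\perp_\omega}=\mathbb R^{2n}$. $\Theta_{\rm even}$ is the set of even integers in $\{1,\dots,n\}$ (labelling simple roots $\alpha_i=\lambda_i-\lambda_{i+1}$, $i<n$, $\alpha_n=2\lambda_n$), and $\mathcal F_{\rm even}$ is the space of isotropic $\Theta_{\rm even}$-flags $(V^i)_{i\in\Theta_{\rm even}}$ (nested $\omega$-isotropic, $\dim V^i=i$), with $V,W$ antipodal iff $V^i\oplus(W^i)^{\perp_\omega}=\mathbb R^{2n}$ for all $i\in\Theta_{\rm even}$. A subset is maximally antipodal if its distinct points are pairwise antipodal and every point of the ambient flag manifold is non-antipodal to some point of it. The representation $\rho_n:\mathrm{SL}(2,\mathbb C)\to\mathrm{Sp}(2n,\mathbb R)$: for $n$ even, the irreducible $n$-dimensional complex representation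 (landing in $\mathrm{Sp}(n,\mathbb C)$), viewed in $\mathrm{Sp}(2n,\mathbb R)$ via $\mathbb C^n\cong\mathbb R^{2n}$ and a real symplectic form conjugated to $\omega$; for $n$ odd, $\rho_{n-1}$ followed by $\begin{bmatrix}A&B\\C&D\end{bmatrix}\mapsto\begin{bmatrix}A&0&B\\0&I_2&0\\C&0&D\end{bmatrix}$. The limit sets are those of $\rho_n(\Gamma)$ for any uniform lattice $\Gamma<\mathrm{SL}(2,\mathbb C)$, which is $\Theta_{\rm even}$-Anosov (hence $\{2\}$-Anosov); they are the images of the strongly dynamics preserving equivariant boundary maps. *)

theory Defs
  imports "HOL-Analysis.Analysis" "HOL-Library.Function_Algebras"
begin

definition rscale :: "real \<Rightarrow> (nat \<Rightarrow> real) \<Rightarrow> (nat \<Rightarrow> real)" where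
  "rscale c v = (\<lambda>i. c * v i)"

interpretation rv: vector_space rscale
  by unfold_locales (auto simp: rscale_def fun_eq_iff algebra_simps)

definition Rvec :: "nat \<Rightarrow> (nat \<Rightarrow> real) set" where
  "Rvec N = {v. \<forall>i. (i < 1 \<or> i > N) \<longrightarrow> v i = 0}"

text \<open>omega(x,y) = x^T J y with J e_i = (-1)^i e_(2n-i+1), i.e. J_(2n+1-i,i) = (-1)^i.\<close>
definition omega :: "nat \<Rightarrow> (nat \<Rightarrow> real) \<Rightarrow> (nat \<Rightarrow> real) \<Rightarrow> real" where
  "omega n x y = (\<Sum>i\<in>{1..2*n}. x (2*n+1-i) * (-1)^i * y i)"

definition omega_perp :: "nat \<Rightarrow> (nat \<Rightarrow> real) set \<Rightarrow> (nat \<Rightarrow> real) set" where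
  "omega_perp n W = {x \<in> Rvec (2*n). \<forall>y\<in>W. omega n x y = 0}"

definition isotropic_subspace :: "nat \<Rightarrow> nat \<Rightarrow> (nat \<Rightarrow> real) set \<Rightarrow> bool" where
  "isotropic_subspace n d V \<longleftrightarrow> rv.subspace V \<and> V \<subseteq> Rvec (2*n) \<and> rv.dim V = d
     \<and> (\<forall>x\<in>V. \<forall>y\<in>V. omega n x y = 0)"

definition direct_sum_full :: "nat \<Rightarrow> (nat \<Rightarrow> real) set \<Rightarrow> (nat \<Rightarrow> real) set \<Rightarrow> bool" where
  "direct_sum_full n V W' \<longleftrightarrow> V \<inter> W' = {0} \<and> {v + w | v w. v \<in> V \<and> w \<in> W'} = Rvec (2*n)"

definition Iso2 :: "nat \<Rightarrow> (nat \<Rightarrow> real) set set" where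
  "Iso2 n = {V. isotropic_subspace n 2 V}"

definition antipodal_Iso2 :: "nat \<Rightarrow> (nat \<Rightarrow> real) set \<Rightarrow> (nat \<Rightarrow> real) set \<Rightarrow> bool" where
  "antipodal_Iso2 n V W \<longleftrightarrow> direct_sum_full n V (omega_perp n W)"

definition Theta_even :: "nat \<Rightarrow> nat set" where
  "Theta_even n = {i. even i \<and> 1 \<le> i \<and> i \<le> n}"

definition F_even :: "nat \<Rightarrow> (nat \<Rightarrow> (nat \<Rightarrow> real) set) set" where
  "F_even n = {F. (\<forall>i\<in>Theta_even n. isotropic_subspace n i (F i))
      \<and> (\<forall>i\<in>Theta_even n. \<forall>j\<in>Theta_even n. i \<le> j \<longrightarrow> F i \<subseteq> F j)
      \<and> (\<forall>i. i \<notin> Theta_even n \<longrightarrow> F i = {})}"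

definition antipodal_even :: "nat \<Rightarrow> (nat \<Rightarrow> (nat \<Rightarrow> real) set) \<Rightarrow> (nat \<Rightarrow> (nat \<Rightarrow> real) set) \<Rightarrow> bool" where
  "antipodal_even n F G \<longleftrightarrow> (\<forall>i\<in>Theta_even n. direct_sum_full n (F i) (omega_perp n (G i)))"

definition maximally_antipodal :: "'a set \<Rightarrow> ('a \<Rightarrow> 'a \<Rightarrow> bool) \<Rightarrow> 'a set \<Rightarrow> bool" where
  "maximally_antipodal X A L \<longleftrightarrow> L \<subseteq> X
     \<and> (\<forall>a\<in>L. \<forall>b\<in>L. a \<noteq> b \<longrightarrow> A a b)
     \<and> (\<forall>x\<in>X. \<exists>a\<in>L. \<not> A x a)"

text \<open>Model of the irreducible m-dimensional complex representation of SL(2,C):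
  C^m = Sym^(m-1) C^2 with monomial basis x^(m-1-k) y^k (k < m); a coefficient vector is
  a function nat => complex supported on {0..<m}.  The matrix [[a,b],[c,d]] acts by
  p(x,y) |-> p(a x + b y, c x + d y).\<close>

definition Cvec :: "nat \<Rightarrow> (nat \<Rightarrow> complex) set" where
  "Cvec m = {u. \<forall>i\<ge>m. u i = 0}"

definition SL2C :: "(complex \<times> complex \<times> complex \<times> complex) set" where
  "SL2C = {(a,b,c,d). a*d - b*c = 1}"

definition sym_coef :: "nat \<Rightarrow> complex \<times> complex \<times> complex \<times> complex \<Rightarrow> nat \<Rightarrow> nat \<Rightarrow> complex" where
  "sym_coef N g k j = (case g of (a,b,c,d) \<Rightarrow>
     (\<Sum>s\<in>{0..j}. if s \<le> N - k \<and> j - s \<le> k then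
        of_nat (N - k choose s) * a ^ (N - k - s) * b ^ s
        * of_nat (k choose (j - s)) * c ^ (k - (j - s)) * d ^ (j - s) else 0))"

definition sym_act :: "nat \<Rightarrow> complex \<times> complex \<times> complex \<times> complex \<Rightarrow> (nat \<Rightarrow> complex) \<Rightarrow> (nat \<Rightarrow> complex)" where
  "sym_act m g u = (\<lambda>j. if j < m then (\<Sum>k<m. u k * sym_coef (m - 1) g k j) else 0)"

text \<open>The invariant complex symplectic form on Sym^(m-1) C^2 (m even).\<close>
definition Omega :: "nat \<Rightarrow> (nat \<Rightarrow> complex) \<Rightarrow> (nat \<Rightarrow> complex) \<Rightarrow> complex" where
  "Omega m u w = (\<Sum>k<m. (-1)^k / of_nat ((m - 1) choose k) * u k * w (m - 1 - k))"

definition symplectic_identification :: "nat \<Rightarrow> complex \<Rightarrow> ((nat \<Rightarrow> complex) \<Rightarrow> (nat \<Rightarrow> real)) \<Rightarrow> bool" where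
  "symplectic_identification m c T \<longleftrightarrow> c \<noteq> 0 \<and> bij_betw T (Cvec m) (Rvec (2*m))
     \<and> (\<forall>u\<in>Cvec m. \<forall>w\<in>Cvec m. T (u + w) = T u + T w)
     \<and> (\<forall>r::real. \<forall>u\<in>Cvec m. T (\<lambda>i. of_real r * u i) = rscale r (T u))
     \<and> (\<forall>u\<in>Cvec m. \<forall>w\<in>Cvec m. omega m (T u) (T w) = Re (c * Omega m u w))"

definition rho_even_act :: "nat \<Rightarrow> ((nat \<Rightarrow> complex) \<Rightarrow> (nat \<Rightarrow> real)) \<Rightarrow> complex \<times> complex \<times> complex \<times> complex
     \<Rightarrow> (nat \<Rightarrow> real) \<Rightarrow> (nat \<Rightarrow> real)" where
  "rho_even_act m T g x = (if x \<in> Rvec (2*m) then T (sym_act m g (the_inv_into (Cvec m) T x)) else 0)"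

text \<open>Block embedding Sp(2n-2) -> Sp(2n), [[A,B],[C,D]] |-> [[A,0,B],[0,I_2,0],[C,0,D]]:
  coordinates 1..n-1 and n+2..2n of R^(2n) carry R^(2n-2), coordinates n, n+1 are fixed.\<close>
definition block_proj :: "nat \<Rightarrow> (nat \<Rightarrow> real) \<Rightarrow> (nat \<Rightarrow> real)" where
  "block_proj n x = (\<lambda>i. if 1 \<le> i \<and> i \<le> n - 1 then x i
                         else if n \<le> i \<and> i \<le> 2*n - 2 then x (i + 2) else 0)"

definition block_incl :: "nat \<Rightarrow> (nat \<Rightarrow> real) \<Rightarrow> (nat \<Rightarrow> real)" where
  "block_incl n y = (\<lambda>i. if 1 \<le> i \<and> i \<le> n - 1 then y i
                         else if n + 2 \<le> i \<and> i \<le> 2*n then y (i - 2) else 0)"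

definition block_mid :: "nat \<Rightarrow> (nat \<Rightarrow> real) \<Rightarrow> (nat \<Rightarrow> real)" where
  "block_mid n x = (\<lambda>i. if i = n \<or> i = n + 1 then x i else 0)"

definition block_embed :: "nat \<Rightarrow> ((nat \<Rightarrow> real) \<Rightarrow> (nat \<Rightarrow> real)) \<Rightarrow> (nat \<Rightarrow> real) \<Rightarrow> (nat \<Rightarrow> real)" where
  "block_embed n h x = (if x \<in> Rvec (2*n) then block_incl n (h (block_proj n x)) + block_mid n x else 0)"

definition rho_act :: "nat \<Rightarrow> ((nat \<Rightarrow> complex) \<Rightarrow> (nat \<Rightarrow> real)) \<Rightarrow> complex \<times> complex \<times> complex \<times> complex
     \<Rightarrow> (nat \<Rightarrow> real) \<Rightarrow> (nat \<Rightarrow> real)" where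
  "rho_act n T g = (if even n then rho_even_act n T g else block_embed n (rho_even_act (n - 1) T g))"

text \<open>The Theta_even-limit set: image of the equivariant boundary map CP^1 -> F_even, i.e. the
  rho_n(SL(2,C))-orbit of the attracting flag xi0 of rho_n(diag(lambda, 1/lambda)), lambda > 1.
  For m = 2*(n div 2), xi0^i is the real subspace underlying the complex span of the top
  i/2 eigenvectors x^(m-1), ..., x^(m-i/2) y^(i/2-1).\<close>
definition xi0 :: "nat \<Rightarrow> ((nat \<Rightarrow> complex) \<Rightarrow> (nat \<Rightarrow> real)) \<Rightarrow> nat \<Rightarrow> (nat \<Rightarrow> real) set" where
  "xi0 n T i = (if i \<in> Theta_even n then
      (let W = T ` {u \<in> Cvec (2 * (n div 2)). \<forall>j\<ge>i div 2. u j = 0}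
       in if even n then W else block_incl n ` W)
     else {})"

definition Lambda_even :: "nat \<Rightarrow> ((nat \<Rightarrow> complex) \<Rightarrow> (nat \<Rightarrow> real)) \<Rightarrow> (nat \<Rightarrow> (nat \<Rightarrow> real) set) set" where
  "Lambda_even n T = {(\<lambda>i. rho_act n T g ` xi0 n T i) | g. g \<in> SL2C}"

definition Lambda_Iso2 :: "nat \<Rightarrow> ((nat \<Rightarrow> complex) \<Rightarrow> (nat \<Rightarrow> real)) \<Rightarrow> (nat \<Rightarrow> real) set set" where
  "Lambda_Iso2 n T = (\<lambda>F. F 2) ` Lambda_even n T"

end

theory Submission imports Defs "HOL-Computational_Algebra.Fundamental_Theorem_Algebra" begin

lemma coeff_lin_pow:
  fixes \<alpha> \<beta> :: complex
  shows "coeff ([:\<alpha>, \<beta>:]^p) s = (if s \<le> p then of_nat (p choose s) * \<alpha>^(p-s) * \<beta>^s else 0)"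
proof (cases "s \<le> p")
  case True thus ?thesis by (simp add: coeff_linear_poly_power mult_ac)
next
  case False
  have "degree ([:\<alpha>, \<beta>:]^p) \<le> p * 1"
    by (rule order_trans[OF degree_power_le]) (simp add: degree_pCons_le)
  with False show ?thesis by (simp add: coeff_eq_0)
qed

lemma poly_sum_upto:
  fixes p :: "complex poly"
  assumes "degree p \<le> N"
  shows "poly p y = (\<Sum>j<Suc N. coeff p j * y^j)"
proof -
  have "poly p y = (\<Sum>j\<le>degree p. coeff p j * y^j)" by (rule poly_altdef)
  also have "\<dots> = (\<Sum>j\<le>N. coeff p j * y^j)"
    using assms by (intro sum.mono_neutral_left) (auto simp: coeff_eq_0)
  finally show ?thesis by (simp add: lessThan_Suc_atMost)
qed

lemma ME:
  fixes a b c d x y :: complex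
  assumes "k \<le> N"
  shows "(\<Sum>j<Suc N. sym_coef N (a,b,c,d) k j * x^(N-j) * y^j) = (a*x+b*y)^(N-k) * (c*x+d*y)^k"
proof -
  define p where "p = [:a*x, b:]^(N-k) * [:c*x, d:]^k"
  have "poly p y = (a*x+b*y)^(N-k) * (c*x+d*y)^k"
    by (simp add: p_def poly_power algebra_simps)
  moreover have "degree p \<le> N"
  proof -
    have "degree p \<le> degree ([:a*x, b:]^(N-k)) + degree ([:c*x, d:]^k)"
      unfolding p_def by (rule degree_mult_le)
    also have "\<dots> \<le> (N-k)*1 + k*1"
      by (intro add_mono order_trans[OF degree_power_le]) (auto simp: degree_pCons_le)
    finally show ?thesis using assms by simp
  qed
  ultimately have 1: "(a*x+b*y)^(N-k) * (c*x+d*y)^k = (\<Sum>j<Suc N. coeff p j * y^j)"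
    using poly_sum_upto by metis
  have 2: "coeff p j = sym_coef N (a,b,c,d) k j * x^(N-j)" if "j \<le> N" for j
  proof -
    have "coeff p j = (\<Sum>s\<le>j. coeff ([:a*x, b:]^(N-k)) s * coeff ([:c*x, d:]^k) (j-s))"
      unfolding p_def by (rule coeff_mult)
    also have "\<dots> = (\<Sum>s\<le>j. (if s \<le> N - k \<and> j - s \<le> k then
        of_nat (N - k choose s) * a ^ (N - k - s) * b ^ s
        * of_nat (k choose (j - s)) * c ^ (k - (j - s)) * d ^ (j - s) else 0) * x^(N-j))"
    proof (intro sum.cong refl)
      fix s assume s: "s \<in> {..j}"
      show "coeff ([:a*x, b:]^(N-k)) s * coeff ([:c*x, d:]^k) (j-s) = (if s \<le> N - k \<and> j - s \<le> k then
        of_nat (N - k choose s) * a ^ (N - k - s) * b ^ s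
        * of_nat (k choose (j - s)) * c ^ (k - (j - s)) * d ^ (j - s) else 0) * x^(N-j)"
      proof (cases "s \<le> N - k \<and> j - s \<le> k")
        case True
        then have e: "N - j = (N - k - s) + (k - (j - s))" using s that assms by auto
        show ?thesis using True unfolding coeff_lin_pow e power_add
          by (simp add: power_mult_distrib mult_ac)
      qed (auto simp: coeff_lin_pow)
    qed
    also have "\<dots> = sym_coef N (a,b,c,d) k j * x^(N-j)"
      by (simp add: sym_coef_def sum_distrib_right atLeast0AtMost)
    finally show ?thesis .
  qed
  show ?thesis unfolding 1 by (intro sum.cong refl) (simp add: 2)
qed


definition Hh :: "nat \<Rightarrow> (nat \<Rightarrow> complex) \<Rightarrow> complex \<Rightarrow> complex \<Rightarrow> complex" where
  "Hh N u x y = (\<Sum>k<Suc N. u k * x^(N-k) * y^k)"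

definition mmul :: "complex \<times> complex \<times> complex \<times> complex \<Rightarrow> complex \<times> complex \<times> complex \<times> complex \<Rightarrow> complex \<times> complex \<times> complex \<times> complex" where
  "mmul g h = (case g of (a,b,c,d) \<Rightarrow> case h of (a',b',c',d') \<Rightarrow>
     (a*a'+b*c', a*b'+b*d', c*a'+d*c', c*b'+d*d'))"

lemma EXP:
  "Hh N (sym_act (Suc N) (a,b,c,d) u) x y = Hh N u (a*x+b*y) (c*x+d*y)"
proof -
  have "Hh N (sym_act (Suc N) (a,b,c,d) u) x y
      = (\<Sum>j<Suc N. (\<Sum>k<Suc N. u k * sym_coef N (a,b,c,d) k j) * x^(N-j) * y^j)"
    by (simp add: Hh_def sym_act_def)
  also have "\<dots> = (\<Sum>k<Suc N. u k * (\<Sum>j<Suc N. sym_coef N (a,b,c,d) k j * x^(N-j) * y^j))"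
  proof -
    have "(\<Sum>j<Suc N. (\<Sum>k<Suc N. u k * sym_coef N (a,b,c,d) k j) * x^(N-j) * y^j)
        = (\<Sum>j<Suc N. \<Sum>k<Suc N. u k * (sym_coef N (a,b,c,d) k j * x^(N-j) * y^j))"
      by (simp only: sum_distrib_right mult.assoc)
    also have "\<dots> = (\<Sum>k<Suc N. \<Sum>j<Suc N. u k * (sym_coef N (a,b,c,d) k j * x^(N-j) * y^j))"
      by (rule sum.swap)
    also have "\<dots> = (\<Sum>k<Suc N. u k * (\<Sum>j<Suc N. sym_coef N (a,b,c,d) k j * x^(N-j) * y^j))"
      by (simp only: sum_distrib_left)
    finally show ?thesis .
  qed
  also have "\<dots> = (\<Sum>k<Suc N. u k * ((a*x+b*y)^(N-k) * (c*x+d*y)^k))"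
    by (intro sum.cong refl) (subst ME, auto)
  finally show ?thesis by (simp add: Hh_def mult_ac)
qed

lemma UNI:
  assumes "u \<in> Cvec (Suc N)" "w \<in> Cvec (Suc N)" "\<And>y. Hh N u 1 y = Hh N w 1 y"
  shows "u = w"
proof -
  have "\<forall>y. (\<Sum>k\<le>N. (u k - w k) * y^k) = 0"
    using assms(3) by (simp add: Hh_def lessThan_Suc_atMost algebra_simps sum_subtractf)
  then have "\<forall>k\<le>N. u k - w k = 0" by (subst (asm) polyfun_eq_0)
  with assms(1,2) show ?thesis
    by (auto simp: Cvec_def fun_eq_iff) (metis not_less_eq_eq)
qed

lemma sym_act_Cvec: "sym_act m g u \<in> Cvec m"
  by (simp add: sym_act_def Cvec_def)

lemma COMP:
  "sym_act (Suc N) X (sym_act (Suc N) Y u) = sym_act (Suc N) (mmul Y X) u"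
proof -
  obtain a b c d where X: "X = (a,b,c,d)" by (cases X) auto
  obtain a' b' c' d' where Y: "Y = (a',b',c',d')" by (cases Y) auto
  show ?thesis
  proof (rule UNI[OF sym_act_Cvec sym_act_Cvec])
    fix y
    show "Hh N (sym_act (Suc N) X (sym_act (Suc N) Y u)) 1 y = Hh N (sym_act (Suc N) (mmul Y X) u) 1 y"
      by (simp add: X Y mmul_def EXP algebra_simps)
  qed
qed

lemma ID: assumes "u \<in> Cvec (Suc N)" shows "sym_act (Suc N) (1,0,0,1) u = u"
  by (rule UNI[OF sym_act_Cvec assms]) (simp add: EXP)


definition pw :: "nat \<Rightarrow> complex \<Rightarrow> complex \<Rightarrow> nat \<Rightarrow> complex" where
  "pw N \<alpha> \<beta> = (\<lambda>k. if k < Suc N then of_nat (N choose k) * \<alpha>^(N-k) * \<beta>^k else 0)"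

lemma pw_Cvec: "pw N \<alpha> \<beta> \<in> Cvec (Suc N)"
  by (simp add: pw_def Cvec_def)

lemma Hh_pw: "Hh N (pw N \<alpha> \<beta>) x y = (\<alpha>*x + \<beta>*y)^N"
proof -
  have "(\<alpha>*x + \<beta>*y)^N = (\<beta>*y + \<alpha>*x)^N" by (simp add: add.commute)
  also have "\<dots> = (\<Sum>k\<le>N. of_nat (N choose k) * (\<beta>*y)^k * (\<alpha>*x)^(N-k))"
    by (rule binomial_ring)
  finally show ?thesis
    by (simp add: Hh_def pw_def lessThan_Suc_atMost power_mult_distrib mult_ac)
qed

lemma act_pw: "sym_act (Suc N) (a,b,c,d) (pw N \<alpha> \<beta>) = pw N (\<alpha>*a+\<beta>*c) (\<alpha>*b+\<beta>*d)"
  by (rule UNI[OF sym_act_Cvec pw_Cvec]) (simp add: EXP Hh_pw algebra_simps)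

lemma Om_pw: "Omega (Suc N) (pw N \<alpha> \<beta>) (pw N \<gamma> \<delta>) = (\<alpha>*\<delta> - \<beta>*\<gamma>)^N"
proof -
  have "(\<alpha>*\<delta> - \<beta>*\<gamma>)^N = (-(\<beta>*\<gamma>) + \<alpha>*\<delta>)^N" by simp
  also have "\<dots> = (\<Sum>k\<le>N. of_nat (N choose k) * (-(\<beta>*\<gamma>))^k * (\<alpha>*\<delta>)^(N-k))"
    by (rule binomial_ring)
  also have "\<dots> = (\<Sum>k<Suc N. (-1)^k / of_nat (N choose k) * pw N \<alpha> \<beta> k * pw N \<gamma> \<delta> (N - k))"
    unfolding lessThan_Suc_atMost
  proof (intro sum.cong refl)
    fix k assume k: "k \<in> {..N}"
    then have nz: "(of_nat (N choose k) :: complex) \<noteq> 0" by simp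
    have "N - (N - k) = k" using k by auto
    then show "of_nat (N choose k) * (-(\<beta>*\<gamma>))^k * (\<alpha>*\<delta>)^(N-k)
      = (-1)^k / of_nat (N choose k) * pw N \<alpha> \<beta> k * pw N \<gamma> \<delta> (N - k)"
      using k nz by (simp add: pw_def binomial_symmetric[symmetric] power_mult_distrib field_simps
          power_minus[of "\<beta>*\<gamma>"])
  qed
  finally show ?thesis by (simp add: Omega_def)
qed


definition Qc :: "nat \<Rightarrow> complex \<times> complex \<times> complex \<times> complex \<Rightarrow> nat \<Rightarrow> nat \<Rightarrow> complex" where
  "Qc N g k l = (\<Sum>j<Suc N. (-1)^j / of_nat (N choose j) * sym_coef N g k j * sym_coef N g l (N-j))"

definition Oc :: "nat \<Rightarrow> nat \<Rightarrow> nat \<Rightarrow> complex" where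
  "Oc N k l = (if l = N - k then (-1)^k / of_nat (N choose k) else 0)"

lemma OmA: "Omega (Suc N) (sym_act (Suc N) g u) (sym_act (Suc N) g w)
   = (\<Sum>k<Suc N. \<Sum>l<Suc N. u k * w l * Qc N g k l)"
proof -
  have "Omega (Suc N) (sym_act (Suc N) g u) (sym_act (Suc N) g w)
    = (\<Sum>j<Suc N. \<Sum>k<Suc N. \<Sum>l<Suc N. u k * w l * ((-1)^j / of_nat (N choose j) * sym_coef N g k j * sym_coef N g l (N-j)))"
    unfolding Omega_def
  proof (intro sum.cong refl)
    fix j assume j: "j \<in> {..<Suc N}"
    show "(- 1) ^ j / of_nat (Suc N - 1 choose j) * sym_act (Suc N) g u j * sym_act (Suc N) g w (Suc N - 1 - j) =
         (\<Sum>k<Suc N. \<Sum>l<Suc N. u k * w l * ((- 1) ^ j / of_nat (N choose j) * sym_coef N g k j * sym_coef N g l (N - j)))"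
      using j by (simp del: sum.lessThan_Suc add: sym_act_def sum_product sum_distrib_left mult_ac sum_divide_distrib)
  qed
  also have "\<dots> = (\<Sum>k<Suc N. \<Sum>j<Suc N. \<Sum>l<Suc N. u k * w l * ((-1)^j / of_nat (N choose j) * sym_coef N g k j * sym_coef N g l (N-j)))"
    by (rule sum.swap)
  also have "\<dots> = (\<Sum>k<Suc N. \<Sum>l<Suc N. \<Sum>j<Suc N. u k * w l * ((-1)^j / of_nat (N choose j) * sym_coef N g k j * sym_coef N g l (N-j)))"
    by (rule sum.cong[OF refl], rule sum.swap)
  also have "\<dots> = (\<Sum>k<Suc N. \<Sum>l<Suc N. u k * w l * Qc N g k l)"
    by (simp only: Qc_def sum_distrib_left)
  finally show ?thesis .
qed

lemma OmE: "Omega (Suc N) u w = (\<Sum>k<Suc N. \<Sum>l<Suc N. u k * w l * Oc N k l)"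
  unfolding Omega_def
proof (intro sum.cong refl)
  fix k assume k: "k \<in> {..<Suc N}"
  have "(\<Sum>l<Suc N. u k * w l * Oc N k l) = (\<Sum>l<Suc N. if l = N - k then u k * w l * ((-1)^k / of_nat (N choose k)) else 0)"
    by (intro sum.cong refl) (simp add: Oc_def)
  also have "\<dots> = u k * w (N-k) * ((-1)^k / of_nat (N choose k))"
    using k by (simp del: sum.lessThan_Suc add: sum.delta')
  finally show "(- 1) ^ k / of_nat (Suc N - 1 choose k) * u k * w (Suc N - 1 - k) = (\<Sum>l<Suc N. u k * w l * Oc N k l)"
    by simp
qed

lemma polyfun2_eq_0:
  fixes E :: "nat \<Rightarrow> nat \<Rightarrow> complex"
  assumes "\<And>s t. (\<Sum>k\<le>N. \<Sum>l\<le>N. s^k * t^l * E k l) = 0"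
  assumes "k \<le> N" "l \<le> N"
  shows "E k l = 0"
proof -
  have "\<forall>k\<le>N. (\<Sum>l\<le>N. E k l * t^l) = 0" for t
  proof -
    have "\<forall>s. (\<Sum>k\<le>N. (\<Sum>l\<le>N. E k l * t^l) * s^k) = 0"
      using assms(1) by (simp add: sum_distrib_left sum_distrib_right mult_ac)
    then show ?thesis by (subst (asm) polyfun_eq_0)
  qed
  then have "\<forall>t. (\<Sum>l\<le>N. E k l * t^l) = 0" using assms(2) by blast
  then show ?thesis using assms(3) by (subst (asm) polyfun_eq_0) blast
qed


lemma INV: "Omega (Suc N) (sym_act (Suc N) (a,b,c,d) u) (sym_act (Suc N) (a,b,c,d) w)
   = (a*d - b*c)^N * Omega (Suc N) u w"
proof -
  define g where "g = (a,b,c,d)"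
  define D where "D k l = Qc N g k l - (a*d - b*c)^N * Oc N k l" for k l
  have D0: "D k l = 0" if "k \<le> N" "l \<le> N" for k l
  proof -
    have "of_nat (N choose k) * of_nat (N choose l) * D k l = 0"
    proof (rule polyfun2_eq_0[where E="\<lambda>k l. of_nat (N choose k) * of_nat (N choose l) * D k l"])
      fix s t :: complex
      have pwe: "\<And>k. k \<le> N \<Longrightarrow> pw N 1 s k = of_nat (N choose k) * s^k"
        "\<And>k. k \<le> N \<Longrightarrow> pw N 1 t k = of_nat (N choose k) * t^k"
        by (simp_all add: pw_def)
      have "(\<Sum>k\<le>N. \<Sum>l\<le>N. s^k * t^l * (of_nat (N choose k) * of_nat (N choose l) * D k l))
        = (\<Sum>k<Suc N. \<Sum>l<Suc N. pw N 1 s k * pw N 1 t l * Qc N g k l)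
          - (a*d - b*c)^N * (\<Sum>k<Suc N. \<Sum>l<Suc N. pw N 1 s k * pw N 1 t l * Oc N k l)"
        unfolding lessThan_Suc_atMost
        by (simp del: sum.lessThan_Suc add: pwe D_def sum_distrib_left sum_subtractf algebra_simps)
      also have "\<dots> = Omega (Suc N) (sym_act (Suc N) g (pw N 1 s)) (sym_act (Suc N) g (pw N 1 t))
           - (a*d - b*c)^N * Omega (Suc N) (pw N 1 s) (pw N 1 t)"
        by (subst OmA, subst OmE, rule refl)
      also have "\<dots> = 0"
        by (simp add: g_def act_pw Om_pw power_mult_distrib[symmetric] algebra_simps)
      finally show "(\<Sum>k\<le>N. \<Sum>l\<le>N. s^k * t^l * (of_nat (N choose k) * of_nat (N choose l) * D k l)) = 0" .
    qed (use that in auto)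
    then show ?thesis using that by simp
  qed
  have "Omega (Suc N) (sym_act (Suc N) g u) (sym_act (Suc N) g w) = (\<Sum>k<Suc N. \<Sum>l<Suc N. u k * w l * Qc N g k l)"
    by (rule OmA)
  also have "\<dots> = (\<Sum>k<Suc N. \<Sum>l<Suc N. (a*d - b*c)^N * (u k * w l * Oc N k l))"
    by (intro sum.cong refl) (use D0 in \<open>auto simp: D_def less_Suc_eq_le\<close>)
  also have "\<dots> = (a*d - b*c)^N * Omega (Suc N) u w"
    by (simp only: OmE sum_distrib_left)
  finally show ?thesis by (simp add: g_def)
qed


lemma sym_act_add: "sym_act m g (u + w) = sym_act m g u + sym_act m g w"
  by (simp add: sym_act_def fun_eq_iff sum.distrib algebra_simps)

lemma sym_act_scale: "sym_act m g (\<lambda>i. z * u i) = (\<lambda>i. z * sym_act m g u i)"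
  by (simp add: sym_act_def fun_eq_iff sum_distrib_left algebra_simps)

lemma sym_act_0: "sym_act m g 0 = 0"
  by (simp add: sym_act_def fun_eq_iff)

lemma Omega_scale2: "Omega m u (\<lambda>i. z * w i) = z * Omega m u w"
  by (simp add: Omega_def sum_distrib_left algebra_simps)

lemma Omega_add1: "Omega m (u + v) w = Omega m u w + Omega m v w"
  by (simp add: Omega_def sum.distrib[symmetric] add_divide_distrib algebra_simps)

definition Std :: "nat \<Rightarrow> nat \<Rightarrow> (nat \<Rightarrow> complex) set" where
  "Std N r = {u \<in> Cvec (Suc N). \<forall>j\<ge>r. u j = 0}"

definition w0 :: "complex \<times> complex \<times> complex \<times> complex" where "w0 = (0,1,-1,0)"

lemma sym_coef_lower: assumes "k < j" shows "sym_coef N (a,0,c,d) k j = 0"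
  unfolding sym_coef_def by (simp, rule sum.neutral) (use assms in auto)

lemma lower_Std: assumes "u \<in> Std N r" shows "sym_act (Suc N) (a,0,c,d) u \<in> Std N r"
proof -
  have "sym_act (Suc N) (a,0,c,d) u j = 0" if "j \<ge> r" for j
  proof -
    have "(\<Sum>k<Suc N. u k * sym_coef N (a,0,c,d) k j) = 0"
    proof (rule sum.neutral, rule ballI)
      fix k assume "k \<in> {..<Suc N}"
      show "u k * sym_coef N (a,0,c,d) k j = 0"
      proof (cases "k < j")
        case True thus ?thesis by (simp add: sym_coef_lower)
      next
        case False thus ?thesis using assms that by (simp add: Std_def)
      qed
    qed
    thus ?thesis by (simp add: sym_act_def)
  qed
  thus ?thesis by (simp add: Std_def sym_act_Cvec)
qed

lemma LOWER: assumes "q1 * q4 = 1"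
  shows "sym_act (Suc N) (q1,0,q3,q4) ` Std N r = Std N r"
proof
  show "sym_act (Suc N) (q1,0,q3,q4) ` Std N r \<subseteq> Std N r" using lower_Std by blast
  show "Std N r \<subseteq> sym_act (Suc N) (q1,0,q3,q4) ` Std N r"
  proof
    fix s assume s: "s \<in> Std N r"
    have "sym_act (Suc N) (q1,0,q3,q4) (sym_act (Suc N) (q4,0,-q3,q1) s) = sym_act (Suc N) (1,0,0,1) s"
      using assms by (simp add: COMP mmul_def algebra_simps)
    also have "\<dots> = s" using s by (simp add: ID Std_def)
    finally show "s \<in> sym_act (Suc N) (q1,0,q3,q4) ` Std N r"
      using lower_Std[OF s] by (metis image_eqI)
  qed
qed

lemma w0_act: "sym_act (Suc N) w0 t = (\<lambda>j. if j < Suc N then (-1)^(N-j) * t (N-j) else 0)"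
proof (rule UNI[OF sym_act_Cvec])
  show "(\<lambda>j. if j < Suc N then (-1)^(N-j) * t (N-j) else 0) \<in> Cvec (Suc N)" by (simp add: Cvec_def)
  fix y
  have "Hh N (sym_act (Suc N) w0 t) 1 y = (\<Sum>k<Suc N. t k * y^(N-k) * (-1)^k)"
    by (simp only: w0_def EXP) (simp add: Hh_def)
  also have "\<dots> = (\<Sum>i<Suc N. t (N - i) * y^(N - (N - i)) * (-1)^(N-i))"
    by (rule sum.reindex_bij_witness[where i="\<lambda>i. N - i" and j="\<lambda>i. N - i"]) auto
  also have "\<dots> = Hh N (\<lambda>j. if j < Suc N then (-1)^(N-j) * t (N-j) else 0) 1 y"
    unfolding Hh_def by (intro sum.cong refl) auto
  finally show "Hh N (sym_act (Suc N) w0 t) 1 y = Hh N (\<lambda>j. if j < Suc N then (-1)^(N-j) * t (N-j) else 0) 1 y" .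
qed

lemma Omega_w0: "Omega (Suc N) s (sym_act (Suc N) w0 t) = (\<Sum>k<Suc N. s k * t k / of_nat (N choose k))"
  unfolding Omega_def w0_act
proof (intro sum.cong refl)
  fix k assume "k \<in> {..<Suc N}"
  then have k: "N - (N - k) = k" "N - k < Suc N" by auto
  have "(-1::complex)^k * (-1)^k = 1" by (simp add: power_add[symmetric])
  then show "(- 1) ^ k / of_nat (Suc N - 1 choose k) * s k *
     (if Suc N - 1 - k < Suc N then (- 1) ^ (N - (Suc N - 1 - k)) * t (N - (Suc N - 1 - k)) else 0) =
       s k * t k / of_nat (N choose k)"
    using k by (simp add: field_simps)
qed


lemma test1:
  fixes a b c d a' b' c' d' \<iota> :: complex
  assumes "a*d - b*c = 1" "a'*d' - b'*c' = 1" "(a*b' - a'*b) * \<iota> = 1"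
  shows "mmul (1,0,(c*b' - d*a')*\<iota>,1) (a,b,a'*\<iota>,b'*\<iota>) = (a,b,c,d)"
    "mmul (mmul (a*b' - a'*b, 0, a*d' - b*c', \<iota>) w0) (a,b,a'*\<iota>,b'*\<iota>) = (a',b',c',d')"
    "mmul (b'*\<iota>, -b, -a'*\<iota>, a) (a,b,a'*\<iota>,b'*\<iota>) = (1,0,0,1)"
  using assms
  apply (simp_all add: mmul_def w0_def)
  apply algebra+
  done


definition Xs :: "nat \<Rightarrow> complex \<times> complex \<times> complex \<times> complex \<Rightarrow> nat \<Rightarrow> (nat \<Rightarrow> complex) set" where
  "Xs N g r = sym_act (Suc N) g ` Std N r"

lemma Std_iso: assumes "2*r \<le> Suc N" "s \<in> Std N r" "s' \<in> Std N r"
  shows "Omega (Suc N) s s' = 0"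
  unfolding Omega_def
proof (rule sum.neutral, rule ballI)
  fix k assume k: "k \<in> {..<Suc N}"
  show "(- 1) ^ k / of_nat (Suc N - 1 choose k) * s k * s' (Suc N - 1 - k) = 0"
  proof (cases "k < r")
    case True
    then have "Suc N - 1 - k \<ge> r" using assms(1) by auto
    then show ?thesis using assms(3) by (simp add: Std_def)
  next
    case False then show ?thesis using assms(2) by (simp add: Std_def)
  qed
qed

lemma ISO: assumes "a*d - b*c = 1" "2*r \<le> Suc N" "x \<in> Xs N (a,b,c,d) r" "y \<in> Xs N (a,b,c,d) r"
  shows "Omega (Suc N) x y = 0"
  using assms by (auto simp: Xs_def INV Std_iso)

lemma Std_zero: "0 \<in> Std N r" by (simp add: Std_def Cvec_def)

lemma T1:
  fixes a b c d a' b' c' d' :: complex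
  assumes det: "a*d - b*c = 1" "a'*d' - b'*c' = 1" and del: "a*b' - a'*b \<noteq> 0"
    and r: "r \<le> Suc N"
    and u: "u \<in> Xs N (a,b,c,d) r" and orth: "\<forall>w\<in>Xs N (a',b',c',d') r. Omega (Suc N) u w = 0"
  shows "u = 0"
proof -
  define \<iota> where "\<iota> = 1 / (a*b' - a'*b)"
  have iota: "(a*b' - a'*b) * \<iota> = 1" using del by (simp add: \<iota>_def)
  define Z where "Z = (a,b,a'*\<iota>,b'*\<iota>)"
  define Q where "Q = (1::complex,0::complex,(c*b' - d*a')*\<iota>,1::complex)"
  define Q' where "Q' = (a*b' - a'*b, 0::complex, a*d' - b*c', \<iota>)"
  note M = test1[OF det iota, folded Z_def Q_def Q'_def]
  have detZ: "a * (b'*\<iota>) - b * (a'*\<iota>) = 1" using iota by (simp add: algebra_simps)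
  obtain s where s: "s \<in> Std N r" and us: "u = sym_act (Suc N) (a,b,c,d) s"
    using u by (auto simp: Xs_def)
  define s' where "s' = sym_act (Suc N) Q s"
  have s': "s' \<in> Std N r" unfolding s'_def Q_def by (rule lower_Std[OF s])
  have us': "u = sym_act (Suc N) Z s'"
    unfolding us s'_def COMP M(1) ..
  have "s' j = 0" if j: "j < r" for j
  proof -
    define e where "e = (\<lambda>i. if i = j then (1::complex) else 0)"
    have e: "e \<in> Std N r" using j r by (auto simp: e_def Std_def Cvec_def)
    then obtain t where t: "t \<in> Std N r" and et: "e = sym_act (Suc N) Q' t"
      using LOWER[of "a*b' - a'*b" \<iota> N "a*d' - b*c'" r] iota unfolding Q'_def by auto
    have "sym_act (Suc N) (a',b',c',d') t \<in> Xs N (a',b',c',d') r" using t by (simp add: Xs_def)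
    moreover have "sym_act (Suc N) (a',b',c',d') t = sym_act (Suc N) Z (sym_act (Suc N) w0 e)"
      unfolding et COMP M(2) ..
    ultimately have "Omega (Suc N) u (sym_act (Suc N) Z (sym_act (Suc N) w0 e)) = 0"
      using orth by metis
    then have "Omega (Suc N) s' (sym_act (Suc N) w0 e) = 0"
      unfolding us' Z_def INV detZ by simp
    then have "(\<Sum>k<Suc N. s' k * e k / of_nat (N choose k)) = 0" by (simp add: Omega_w0)
    moreover have "(\<Sum>k<Suc N. s' k * e k / of_nat (N choose k)) = s' j / of_nat (N choose j)"
      using j r by (simp del: sum.lessThan_Suc add: e_def if_distrib[of "\<lambda>x. _ * x / _"] sum.delta' cong: if_cong)
    ultimately show ?thesis using j r by simp
  qed
  then have "s' = 0" using s' by (auto simp: Std_def fun_eq_iff) (meson not_le)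
  then show ?thesis using us' by (simp add: sym_act_0)
qed


lemma T2:
  fixes a b c d a' b' c' d' :: complex
  assumes det: "a*d - b*c = 1" "a'*d' - b'*c' = 1" and del: "a*b' - a'*b \<noteq> 0"
    and v: "v \<in> Cvec (Suc N)"
  shows "\<exists>u1\<in>Xs N (a,b,c,d) r. \<exists>u2\<in>Cvec (Suc N). v = u1 + u2 \<and>
           (\<forall>w\<in>Xs N (a',b',c',d') r. Omega (Suc N) u2 w = 0)"
proof -
  define \<iota> where "\<iota> = 1 / (a*b' - a'*b)"
  have iota: "(a*b' - a'*b) * \<iota> = 1" using del by (simp add: \<iota>_def)
  define Z where "Z = (a,b,a'*\<iota>,b'*\<iota>)"
  define Q where "Q = (1::complex,0::complex,(c*b' - d*a')*\<iota>,1::complex)"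
  define Q' where "Q' = (a*b' - a'*b, 0::complex, a*d' - b*c', \<iota>)"
  note M = test1[OF det iota, folded Z_def Q_def Q'_def]
  have detZ: "a * (b'*\<iota>) - b * (a'*\<iota>) = 1" using iota by (simp add: algebra_simps)
  define v' where "v' = sym_act (Suc N) (b'*\<iota>, -b, -a'*\<iota>, a) v"
  have vv: "sym_act (Suc N) Z v' = v"
    unfolding v'_def COMP M(3) using v by (rule ID)
  define s1 where "s1 = (\<lambda>k. if k < r then v' k else 0)"
  define s2 where "s2 = (\<lambda>k. if k < r then 0 else v' k)"
  have v'C: "v' \<in> Cvec (Suc N)" unfolding v'_def by (rule sym_act_Cvec)
  have s1: "s1 \<in> Std N r" using v'C by (auto simp: s1_def Std_def Cvec_def)
  have s12: "v' = s1 + s2" by (auto simp: s1_def s2_def fun_eq_iff)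
  obtain t1 where t1: "t1 \<in> Std N r" "s1 = sym_act (Suc N) Q t1"
    using LOWER[of 1 1 N "(c*b' - d*a')*\<iota>" r] s1 unfolding Q_def by auto
  have u1: "sym_act (Suc N) Z s1 \<in> Xs N (a,b,c,d) r"
    unfolding t1(2) COMP M(1) Xs_def using t1(1) by blast
  have "\<forall>w\<in>Xs N (a',b',c',d') r. Omega (Suc N) (sym_act (Suc N) Z s2) w = 0"
  proof
    fix w assume "w \<in> Xs N (a',b',c',d') r"
    then obtain t where t: "t \<in> Std N r" and wt: "w = sym_act (Suc N) (a',b',c',d') t"
      by (auto simp: Xs_def)
    define t' where "t' = sym_act (Suc N) Q' t"
    have t': "t' \<in> Std N r" unfolding t'_def Q'_def by (rule lower_Std[OF t])
    have "w = sym_act (Suc N) Z (sym_act (Suc N) w0 t')"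
      unfolding wt t'_def COMP M(2) ..
    then have "Omega (Suc N) (sym_act (Suc N) Z s2) w = Omega (Suc N) s2 (sym_act (Suc N) w0 t')"
      by (simp add: Z_def INV detZ)
    also have "\<dots> = (\<Sum>k<Suc N. s2 k * t' k / of_nat (N choose k))" by (rule Omega_w0)
    also have "\<dots> = 0"
      using t' by (intro sum.neutral) (auto simp: s2_def Std_def)
    finally show "Omega (Suc N) (sym_act (Suc N) Z s2) w = 0" .
  qed
  moreover have "v = sym_act (Suc N) Z s1 + sym_act (Suc N) Z s2"
    using vv s12 by (simp add: sym_act_add)
  ultimately show ?thesis using u1 sym_act_Cvec by blast
qed

lemma SAME:
  fixes a b c d a' b' c' d' :: complex
  assumes det: "a*d - b*c = 1" "a'*d' - b'*c' = 1" and del: "a*b' - a'*b = 0"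
  shows "Xs N (a',b',c',d') r = Xs N (a,b,c,d) r"
proof -
  define Q where "Q = (a'*d - b'*c, 0::complex, c'*d - d'*c, -c'*b + d'*a)"
  have M: "mmul Q (a,b,c,d) = (a',b',c',d')" "(a'*d - b'*c) * (-c'*b + d'*a) = 1"
    using det del unfolding Q_def by (simp_all add: mmul_def) algebra+
  have "Xs N (a',b',c',d') r = sym_act (Suc N) (a,b,c,d) ` sym_act (Suc N) Q ` Std N r"
    unfolding Xs_def image_comp o_def COMP M(1) ..
  also have "\<dots> = Xs N (a,b,c,d) r"
    unfolding Q_def LOWER[OF M(2)] Xs_def ..
  finally show ?thesis .
qed


lemma Om_u_pw: "Omega (Suc N) u (pw N a b) = (\<Sum>k<Suc N. (-1)^k * u k * a^k * b^(N-k))"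
  unfolding Omega_def
proof (intro sum.cong refl)
  fix k assume "k \<in> {..<Suc N}"
  then have k: "k \<le> N" "N - (N - k) = k" by auto
  then have nz: "(of_nat (N choose k) :: complex) \<noteq> 0" by simp
  show "(- 1) ^ k / of_nat (Suc N - 1 choose k) * u k * pw N a b (Suc N - 1 - k) =
         (- 1) ^ k * u k * a ^ k * b ^ (N - k)"
    using k nz by (simp add: pw_def binomial_symmetric[symmetric] field_simps)
qed

lemma Std1: assumes "t \<in> Std N 1" shows "t = (\<lambda>k. t 0 * pw N 1 0 k)"
proof
  fix k show "t k = t 0 * pw N 1 0 k"
  proof (cases "k = 0")
    case True thus ?thesis by (simp add: pw_def)
  next
    case False thus ?thesis using assms by (simp add: Std_def pw_def)
  qed
qed

lemma ROOT: assumes "u \<in> Cvec (Suc N)" "N \<ge> 1"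
  shows "\<exists>a b c d. a*d - b*c = 1 \<and> (\<forall>w\<in>Xs N (a,b,c,d) 1. Omega (Suc N) u w = 0)"
proof -
  have key: "\<forall>w\<in>Xs N (a,b,c,d) 1. Omega (Suc N) u w = 0" if z: "Omega (Suc N) u (pw N a b) = 0" for a b c d
  proof
    fix w assume "w \<in> Xs N (a,b,c,d) 1"
    then obtain t where t: "t \<in> Std N 1" "w = sym_act (Suc N) (a,b,c,d) t" by (auto simp: Xs_def)
    have "w = (\<lambda>i. t 0 * pw N a b i)"
      unfolding t(2) by (subst Std1[OF t(1)]) (simp add: sym_act_scale act_pw)
    then show "Omega (Suc N) u w = 0" by (simp add: Omega_scale2 z)
  qed
  show ?thesis
  proof (cases "u N = 0")
    case True
    have "Omega (Suc N) u (pw N 1 0) = 0"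
      unfolding Om_u_pw
      by (rule sum.neutral) (use True in \<open>auto simp: less_Suc_eq\<close>)
    then show ?thesis using key[of 1 0 0 1] by (intro exI[of _ 1] exI[of _ 0]) auto
  next
    case False
    define p where "p = (\<Sum>k\<le>N. monom ((-1)^k * u k) k)"
    have cN: "coeff p N = (-1)^N * u N"
      by (simp add: p_def coeff_sum coeff_monom sum.delta)
    have "\<not> (\<exists>a l. a \<noteq> 0 \<and> l = 0 \<and> p = pCons a l)"
    proof
      assume "\<exists>a l. a \<noteq> 0 \<and> l = 0 \<and> p = pCons a l"
      then obtain a where "p = [:a:]" by auto
      then have "coeff p N = 0" using assms(2) by (cases N) auto
      with cN False show False by simp
    qed
    then obtain z where z: "poly p z = 0" using fundamental_theorem_of_algebra_alt by blast
    have "Omega (Suc N) u (pw N z 1) = poly p z"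
      unfolding Om_u_pw p_def by (simp add: poly_sum poly_monom lessThan_Suc_atMost mult_ac)
    then show ?thesis using key[of z 1 "-1" 0] z by (intro exI[of _ z] exI[of _ 1] exI[of _ "-1"] exI[of _ 0]) auto
  qed
qed


section \<open>Real side\<close>

lemma sum_fun_apply: "(\<Sum>x\<in>A. f x) (j::nat) = (\<Sum>x\<in>A. f x j)"
  by (induction A rule: infinite_finite_induct) auto

lemma Rvec_add: "x \<in> Rvec N \<Longrightarrow> y \<in> Rvec N \<Longrightarrow> x + y \<in> Rvec N"
  by (simp add: Rvec_def)

lemma Rvec_diff: "x \<in> Rvec N \<Longrightarrow> y \<in> Rvec N \<Longrightarrow> x - y \<in> Rvec N"
  by (simp add: Rvec_def)

lemma Rvec_0: "0 \<in> Rvec N" by (simp add: Rvec_def)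

lemma omega_0: "omega n 0 y = 0" by (simp add: omega_def)

lemma block_incl_R: "block_incl n y \<in> Rvec (2*n)"
  by (auto simp: block_incl_def Rvec_def)

lemma block_proj_R: "n \<ge> 1 \<Longrightarrow> block_proj n x \<in> Rvec (2*(n-1))"
  by (auto simp: block_proj_def Rvec_def)

lemma block_PE: assumes "y \<in> Rvec (2*(n-1))" "n \<ge> 2" shows "block_proj n (block_incl n y) = y"
proof
  fix i
  show "block_proj n (block_incl n y) i = y i"
    using assms by (cases "i = 0") (auto simp: block_proj_def block_incl_def Rvec_def)
qed

lemma block_mid_incl: "block_mid n (block_incl n y) = 0"
  by (auto simp: block_mid_def block_incl_def fun_eq_iff)

lemma block_incl_add: "block_incl n (x + y) = block_incl n x + block_incl n y"
  by (auto simp: block_incl_def fun_eq_iff)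

lemma block_incl_scale: "block_incl n (rscale r x) = rscale r (block_incl n x)"
  by (auto simp: block_incl_def fun_eq_iff rscale_def)

lemma block_proj_add: "block_proj n (x + y) = block_proj n x + block_proj n y"
  by (auto simp: block_proj_def fun_eq_iff)

lemma block_omega:
  assumes "m \<ge> 1"
  shows "omega (Suc m) x (block_incl (Suc m) y) = omega m (block_proj (Suc m) x) y"
proof -
  define f where "f i = x (2 * Suc m + 1 - i) * (-1)^i * block_incl (Suc m) y i" for i
  define g where "g i = block_proj (Suc m) x (2 * m + 1 - i) * (-1)^i * y i" for i
  have e2: "2 * Suc m = m + (m + 2)" by simp
  have "omega (Suc m) x (block_incl (Suc m) y) = sum f {1..m + (m + 2)}"
    unfolding omega_def f_def e2[symmetric] ..
  also have "\<dots> = sum f {1..m} + sum f {m+1..m + (m+2)}"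
    by (rule sum.ub_add_nat) (use assms in auto)
  also have "sum f {m+1..m + (m+2)} = sum f {m+1..(m+1) + 1} + sum f {(m+1)+1+1..(m+1)+1 + m}"
  proof -
    have e: "m + (m+2) = ((m+1)+1)+m" by simp
    show ?thesis unfolding e by (rule sum.ub_add_nat) auto
  qed
  also have "sum f {m+1..(m+1) + 1} = 0"
    by (rule sum.neutral) (auto simp: f_def block_incl_def)
  also have "sum f {(m+1)+1+1..(m+1)+1 + m} = sum f {(m+1)+2..(2*m)+2}"
    by (rule arg_cong[where f="sum f"]) auto
  also have "\<dots> = sum (\<lambda>j. f (j+2)) {m+1..2*m}"
    by (rule sum.shift_bounds_cl_nat_ivl)
  also have "sum f {1..m} = sum g {1..m}"
    by (rule sum.cong) (auto simp: f_def g_def block_incl_def block_proj_def Suc_diff_le)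
  also have "sum (\<lambda>j. f (j+2)) {m+1..2*m} = sum g {m+1..m+m}"
    by (rule sum.cong) (auto simp: f_def g_def block_incl_def block_proj_def)
  also have "sum g {1..m} + (0 + sum g {m+1..m+m}) = sum g {1..m+m}"
    by (simp only: add_0_left, rule sum.ub_add_nat[symmetric]) (use assms in auto)
  also have "\<dots> = omega m (block_proj (Suc m) x) y"
    unfolding omega_def g_def mult_2 ..
  finally show ?thesis .
qed


definition cscale :: "real \<Rightarrow> (nat \<Rightarrow> complex) \<Rightarrow> (nat \<Rightarrow> complex)" where
  "cscale r u = (\<lambda>i. of_real r * u i)"

interpretation cv: vector_space cscale
  by unfold_locales (auto simp: cscale_def fun_eq_iff algebra_simps)

interpretation cr: vector_space_pair cscale rscale by unfold_locales

definition ev :: "nat \<Rightarrow> nat \<Rightarrow> complex" where "ev k = (\<lambda>i. if i = k then 1 else 0)"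
definition iev :: "nat \<Rightarrow> nat \<Rightarrow> complex" where "iev k = (\<lambda>i. if i = k then \<i> else 0)"
definition Bas :: "nat \<Rightarrow> (nat \<Rightarrow> complex) set" where "Bas r = ev ` {..<r} \<union> iev ` {..<r}"

lemma ev_inj: "inj_on ev A"
  unfolding inj_on_def ev_def fun_eq_iff by (metis zero_neq_one)
lemma iev_inj: "inj_on iev A"
  unfolding inj_on_def iev_def fun_eq_iff by (metis complex_i_not_zero)
lemma ev_iev_disj: "ev ` A \<inter> iev ` B = {}"
  unfolding ev_def iev_def fun_eq_iff by (auto, metis complex_i_not_one)

lemma Bas_card: "card (Bas r) = 2 * r"
proof -
  have "inj_on ev {..<r}" by (rule ev_inj)
  moreover have "inj_on iev {..<r}" by (rule iev_inj)
  moreover have "ev ` {..<r} \<inter> iev ` {..<r} = {}" by (rule ev_iev_disj)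
  ultimately show ?thesis unfolding Bas_def
    by (subst card_Un_disjoint) (auto simp: card_image)
qed

lemma Std_subspace: "cv.subspace (Std N r)"
  by (auto simp: cv.subspace_def Std_def Cvec_def cscale_def)

lemma Bas_span: assumes "r \<le> Suc N" shows "cv.span (Bas r) = Std N r"
proof
  have "Bas r \<subseteq> Std N r" using assms by (auto simp: Bas_def Std_def Cvec_def ev_def iev_def)
  then show "cv.span (Bas r) \<subseteq> Std N r" by (rule cv.span_minimal[OF _ Std_subspace])
  show "Std N r \<subseteq> cv.span (Bas r)"
  proof
    fix s assume s: "s \<in> Std N r"
    have "s = (\<Sum>k<r. cscale (Re (s k)) (ev k) + cscale (Im (s k)) (iev k))"
    proof
      fix j
      have "(\<Sum>k<r. cscale (Re (s k)) (ev k) + cscale (Im (s k)) (iev k)) j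
          = (\<Sum>k<r. if k = j then s j else 0)"
        unfolding sum_fun_apply
        by (intro sum.cong refl) (auto simp: cscale_def ev_def iev_def complex_eq_iff)
      also have "\<dots> = s j" using s by (auto simp: Std_def)
      finally show "s j = (\<Sum>k<r. cscale (Re (s k)) (ev k) + cscale (Im (s k)) (iev k)) j" by simp
    qed
    also have "\<dots> \<in> cv.span (Bas r)"
      by (intro cv.span_sum cv.span_add cv.span_scale cv.span_base) (auto simp: Bas_def)
    finally show "s \<in> cv.span (Bas r)" .
  qed
qed

lemma Bas_indep: "cv.independent (Bas r)"
proof
  assume "cv.dependent (Bas r)"
  then obtain u where u: "\<exists>v\<in>Bas r. u v \<noteq> 0" "(\<Sum>v\<in>Bas r. cscale (u v) v) = 0"
    using cv.dependent_finite[of "Bas r"] by (auto simp: Bas_def)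
  have inj1: "inj_on ev {..<r}" by (rule ev_inj)
  have inj2: "inj_on iev {..<r}" by (rule iev_inj)
  have disj: "ev ` {..<r} \<inter> iev ` {..<r} = {}" by (rule ev_iev_disj)
  have z: "u (ev k) = 0 \<and> u (iev k) = 0" if k: "k < r" for k
  proof -
    have "0 = (\<Sum>v\<in>Bas r. cscale (u v) v) k" using u(2) by simp
    also have "\<dots> = (\<Sum>v\<in>ev ` {..<r}. cscale (u v) v k) + (\<Sum>v\<in>iev ` {..<r}. cscale (u v) v k)"
      unfolding sum_fun_apply Bas_def by (rule sum.union_disjoint) (auto simp: disj)
    also have "\<dots> = (\<Sum>i<r. cscale (u (ev i)) (ev i) k) + (\<Sum>i<r. cscale (u (iev i)) (iev i) k)"
      by (simp add: sum.reindex[OF inj1] sum.reindex[OF inj2])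
    also have "\<dots> = of_real (u (ev k)) + \<i> * of_real (u (iev k))"
      using k by (simp add: cscale_def ev_def iev_def if_distrib mult_ac cong: if_cong)
    finally have "of_real (u (ev k)) + \<i> * of_real (u (iev k)) = 0" by simp
    then show ?thesis by (simp add: complex_eq_iff)
  qed
  from u(1) z show False by (auto simp: Bas_def)
qed


locale RS =
  fixes n N :: nat and cc :: complex and T :: "(nat \<Rightarrow> complex) \<Rightarrow> (nat \<Rightarrow> real)"
    and E P :: "(nat \<Rightarrow> real) \<Rightarrow> (nat \<Rightarrow> real)"
  assumes N1: "N \<ge> 1"
  and SI: "symplectic_identification (Suc N) cc T"
  and E_add: "\<And>x y. E (x + y) = E x + E y" and E_scale: "\<And>r x. E (rscale r x) = rscale r (E x)"
  and P_add: "\<And>x y. P (x + y) = P x + P y"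
  and E_R: "\<And>x. x \<in> Rvec (2*Suc N) \<Longrightarrow> E x \<in> Rvec (2*n)"
  and PE: "\<And>x. x \<in> Rvec (2*Suc N) \<Longrightarrow> P (E x) = x"
  and P_R: "\<And>x. x \<in> Rvec (2*n) \<Longrightarrow> P x \<in> Rvec (2*Suc N)"
  and omEP: "\<And>x y. x \<in> Rvec (2*n) \<Longrightarrow> y \<in> Rvec (2*Suc N) \<Longrightarrow> omega n x (E y) = omega (Suc N) (P x) y"
begin

definition Fl where "Fl g r = E ` T ` Xs N g r"

lemma cc0: "cc \<noteq> 0" using SI by (simp add: symplectic_identification_def)
lemma T_bij: "bij_betw T (Cvec (Suc N)) (Rvec (2*Suc N))" using SI by (simp add: symplectic_identification_def)
lemma T_add: "u \<in> Cvec (Suc N) \<Longrightarrow> w \<in> Cvec (Suc N) \<Longrightarrow> T (u + w) = T u + T w"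
  using SI by (simp add: symplectic_identification_def)
lemma T_scale: "u \<in> Cvec (Suc N) \<Longrightarrow> T (\<lambda>i. of_real r * u i) = rscale r (T u)"
  using SI by (simp add: symplectic_identification_def)
lemma T_om: "u \<in> Cvec (Suc N) \<Longrightarrow> w \<in> Cvec (Suc N) \<Longrightarrow> omega (Suc N) (T u) (T w) = Re (cc * Omega (Suc N) u w)"
  using SI by (simp add: symplectic_identification_def)
lemma T_R: "u \<in> Cvec (Suc N) \<Longrightarrow> T u \<in> Rvec (2*Suc N)"
  using T_bij by (auto simp: bij_betw_def)
lemma T_inj: "inj_on T (Cvec (Suc N))" using T_bij by (auto simp: bij_betw_def)
lemma T_surj: "y \<in> Rvec (2*Suc N) \<Longrightarrow> \<exists>u\<in>Cvec (Suc N). T u = y"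
proof -
  assume "y \<in> Rvec (2*Suc N)"
  then have "y \<in> T ` Cvec (Suc N)" using T_bij by (simp add: bij_betw_def)
  then show ?thesis by blast
qed
lemma Cvec_0: "0 \<in> Cvec m" by (simp add: Cvec_def)
lemma T_0: "T 0 = 0"
  using T_add[OF Cvec_0 Cvec_0] by simp
lemma E_0: "E 0 = 0" using E_add[of 0 0] by simp
lemma P_diff: "P (x - y) = P x - P y"
  using P_add[of "x - y" y] by (simp add: algebra_simps)

lemma Xs_Cvec: "Xs N g r \<subseteq> Cvec (Suc N)" by (auto simp: Xs_def sym_act_Cvec)
lemma Xs_CvecI: "w \<in> Xs N g r \<Longrightarrow> w \<in> Cvec (Suc N)" by (auto simp: Xs_def sym_act_Cvec)
lemma Xs_scale: "w \<in> Xs N g r \<Longrightarrow> (\<lambda>i. z * w i) \<in> Xs N g r"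
proof -
  assume "w \<in> Xs N g r"
  then obtain t where t: "t \<in> Std N r" "w = sym_act (Suc N) g t" by (auto simp: Xs_def)
  have "(\<lambda>i. z * t i) \<in> Std N r" using t(1) by (auto simp: Std_def Cvec_def)
  then show ?thesis unfolding t(2) sym_act_scale[symmetric] Xs_def by blast
qed
lemma Xs_0: "0 \<in> Xs N g r"
  unfolding Xs_def using Std_zero sym_act_0 by (metis image_eqI)

lemma PERP:
  assumes "\<forall>w\<in>Xs N h r. Re (cc * Omega (Suc N) u w) = 0"
  shows "\<forall>w\<in>Xs N h r. Omega (Suc N) u w = 0"
proof
  fix w assume w: "w \<in> Xs N h r"
  define X where "X = cc * Omega (Suc N) u w"
  have "Re (cc * Omega (Suc N) u (\<lambda>i. cnj X * w i)) = 0" using assms Xs_scale[OF w] by blast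
  moreover have "cc * Omega (Suc N) u (\<lambda>i. cnj X * w i) = cnj X * X"
    unfolding Omega_scale2 X_def by (simp add: mult_ac)
  ultimately have "Re (cnj X * X) = 0" by simp
  then have "Re X ^ 2 + Im X ^ 2 = 0" by (simp add: power2_eq_square)
  then have "X = 0" by (simp add: complex_eq_iff sum_power2_eq_zero_iff)
  then show "Omega (Suc N) u w = 0" using cc0 by (simp add: X_def)
qed


lemma perp_Fl: assumes "x \<in> Rvec (2*n)"
  shows "x \<in> omega_perp n (Fl h r) \<longleftrightarrow> (\<forall>w\<in>Xs N h r. omega (Suc N) (P x) (T w) = 0)"
proof -
  have "omega n x (E (T w)) = omega (Suc N) (P x) (T w)" if "w \<in> Xs N h r" for w
    by (rule omEP[OF assms T_R[OF Xs_CvecI[OF that]]])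
  then show ?thesis using assms by (auto simp: omega_perp_def Fl_def)
qed

lemma Fl_R: "Fl g r \<subseteq> Rvec (2*n)"
  by (auto simp: Fl_def intro!: E_R T_R Xs_CvecI)

lemma L_anti:
  fixes a b c d a' b' c' d' :: complex
  assumes det: "a*d - b*c = 1" "a'*d' - b'*c' = 1" and del: "a*b' - a'*b \<noteq> 0"
    and r: "r \<le> Suc N"
  shows "direct_sum_full n (Fl (a,b,c,d) r) (omega_perp n (Fl (a',b',c',d') r))"
  unfolding direct_sum_full_def
proof (intro conjI)
  show "Fl (a,b,c,d) r \<inter> omega_perp n (Fl (a',b',c',d') r) = {0}"
  proof
    show "Fl (a,b,c,d) r \<inter> omega_perp n (Fl (a',b',c',d') r) \<subseteq> {0}"
    proof
      fix x assume x: "x \<in> Fl (a,b,c,d) r \<inter> omega_perp n (Fl (a',b',c',d') r)"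
      then obtain u where u: "u \<in> Xs N (a,b,c,d) r" "x = E (T u)" by (auto simp: Fl_def)
      have uC: "u \<in> Cvec (Suc N)" using Xs_CvecI[OF u(1)] .
      have xR: "x \<in> Rvec (2*n)" using x Fl_R[of "(a,b,c,d)" r] by blast
      have Px: "P x = T u" using u(2) PE T_R uC by simp
      have "\<forall>w\<in>Xs N (a',b',c',d') r. Re (cc * Omega (Suc N) u w) = 0"
        using x perp_Fl[OF xR] Px T_om[OF uC Xs_CvecI] by auto
      then have "\<forall>w\<in>Xs N (a',b',c',d') r. Omega (Suc N) u w = 0" by (rule PERP)
      then have "u = 0" using T1[OF det del r u(1)] by blast
      then show "x \<in> {0}" using u(2) T_0 E_0 by simp
    qed
    have "0 \<in> Fl (a,b,c,d) r" using Xs_0 T_0 E_0 unfolding Fl_def by (metis image_eqI)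
    moreover have "0 \<in> omega_perp n (Fl (a',b',c',d') r)"
      by (simp add: omega_perp_def Rvec_0 omega_0)
    ultimately show "{0} \<subseteq> Fl (a,b,c,d) r \<inter> omega_perp n (Fl (a',b',c',d') r)" by simp
  qed
  show "{v + w |v w. v \<in> Fl (a,b,c,d) r \<and> w \<in> omega_perp n (Fl (a',b',c',d') r)} = Rvec (2 * n)"
  proof
    show "{v + w |v w. v \<in> Fl (a,b,c,d) r \<and> w \<in> omega_perp n (Fl (a',b',c',d') r)} \<subseteq> Rvec (2 * n)"
      using Fl_R[of "(a,b,c,d)" r] by (auto simp: omega_perp_def intro!: Rvec_add)
    show "Rvec (2 * n) \<subseteq> {v + w |v w. v \<in> Fl (a,b,c,d) r \<and> w \<in> omega_perp n (Fl (a',b',c',d') r)}"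
    proof
      fix x assume x: "x \<in> Rvec (2*n)"
      define y where "y = P x"
      have yR: "y \<in> Rvec (2*Suc N)" using P_R x by (simp add: y_def)
      obtain v0 where v0: "v0 \<in> Cvec (Suc N)" "T v0 = y" using T_surj[OF yR] by blast
      obtain u1 u2 where u: "u1 \<in> Xs N (a,b,c,d) r" "u2 \<in> Cvec (Suc N)" "v0 = u1 + u2"
        "\<forall>w\<in>Xs N (a',b',c',d') r. Omega (Suc N) u2 w = 0"
        using T2[OF det del v0(1), of r] by blast
      have u1C: "u1 \<in> Cvec (Suc N)" using Xs_CvecI[OF u(1)] .
      define w where "w = E (T u2) + (x - E y)"
      have sum: "x = E (T u1) + w"
      proof -
        have "E (T u1) + E (T u2) = E y" using v0 u u1C by (simp add: T_add E_add[symmetric])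
        then show ?thesis by (simp add: w_def algebra_simps)
      qed
      have wR: "w \<in> Rvec (2*n)" unfolding w_def
        by (intro Rvec_add Rvec_diff E_R T_R u(2) x yR)
      have "P w = T u2"
        using PE[OF T_R[OF u(2)]] PE[OF yR] by (simp add: w_def P_add P_diff y_def)
      then have "w \<in> omega_perp n (Fl (a',b',c',d') r)"
        unfolding perp_Fl[OF wR] using u(4) T_om[OF u(2) Xs_CvecI] by auto
      moreover have "E (T u1) \<in> Fl (a,b,c,d) r" using u(1) by (simp add: Fl_def)
      ultimately show "x \<in> {v + w |v w. v \<in> Fl (a,b,c,d) r \<and> w \<in> omega_perp n (Fl (a',b',c',d') r)}"
        using sum by blast
    qed
  qed
qed

lemma L_same:
  fixes a b c d a' b' c' d' :: complex
  assumes det: "a*d - b*c = 1" "a'*d' - b'*c' = 1" and del: "a*b' - a'*b = 0"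
  shows "Fl (a',b',c',d') r = Fl (a,b,c,d) r"
  unfolding Fl_def SAME[OF det del] ..

lemma L_max:
  assumes V: "V \<subseteq> Rvec (2*n)" "v \<in> V" "v \<noteq> 0"
  shows "\<exists>a b c d. a*d - b*c = 1 \<and> \<not> direct_sum_full n V (omega_perp n (Fl (a,b,c,d) 1))"
proof -
  have vR: "v \<in> Rvec (2*n)" using V by auto
  have yR: "P v \<in> Rvec (2*Suc N)" using P_R vR by simp
  obtain u where u: "u \<in> Cvec (Suc N)" "T u = P v" using T_surj[OF yR] by blast
  obtain a b c d where g: "a*d - b*c = 1" "\<forall>w\<in>Xs N (a,b,c,d) 1. Omega (Suc N) u w = 0"
    using ROOT[OF u(1) N1] by blast
  have "v \<in> omega_perp n (Fl (a,b,c,d) 1)"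
    unfolding perp_Fl[OF vR] u(2)[symmetric] using g(2) T_om[OF u(1) Xs_CvecI] by auto
  then have "v \<in> V \<inter> omega_perp n (Fl (a,b,c,d) 1)" using V by auto
  then have "V \<inter> omega_perp n (Fl (a,b,c,d) 1) \<noteq> {0}" using V(3) by auto
  then have "\<not> direct_sum_full n V (omega_perp n (Fl (a,b,c,d) 1))"
    unfolding direct_sum_full_def by blast
  then show ?thesis using g(1) by blast
qed

definition fmp where "fmp g u = E (T (sym_act (Suc N) g u))"

lemma fmp_linear: "Vector_Spaces.linear cscale rscale (fmp g)"
proof -
  have "fmp g (u + w) = fmp g u + fmp g w" for u w
    by (simp add: fmp_def sym_act_add T_add sym_act_Cvec E_add)
  moreover have "fmp g (cscale r u) = rscale r (fmp g u)" for r u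
    by (simp add: fmp_def cscale_def sym_act_scale T_scale sym_act_Cvec E_scale)
  ultimately show ?thesis
    unfolding Vector_Spaces.linear_iff using cv.vector_space_axioms rv.vector_space_axioms by blast
qed

lemma fmp_inj:
  assumes "a*d - b*c = 1"
  shows "inj_on (fmp (a,b,c,d)) (Cvec (Suc N))"
proof
  fix u w assume uw: "u \<in> Cvec (Suc N)" "w \<in> Cvec (Suc N)" "fmp (a,b,c,d) u = fmp (a,b,c,d) w"
  then have "P (fmp (a,b,c,d) u) = P (fmp (a,b,c,d) w)" by simp
  moreover have "\<And>v. P (fmp (a,b,c,d) v) = T (sym_act (Suc N) (a,b,c,d) v)"
    unfolding fmp_def using PE[OF T_R[OF sym_act_Cvec]] .
  ultimately have "T (sym_act (Suc N) (a,b,c,d) u) = T (sym_act (Suc N) (a,b,c,d) w)"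
    by simp
  then have e: "sym_act (Suc N) (a,b,c,d) u = sym_act (Suc N) (a,b,c,d) w"
    using T_inj sym_act_Cvec by (meson inj_onD)
  have M: "mmul (a,b,c,d) (d,-b,-c,a) = (1,0,0,1)"
    using assms by (simp add: mmul_def algebra_simps)
  have "u = sym_act (Suc N) (d,-b,-c,a) (sym_act (Suc N) (a,b,c,d) u)"
    unfolding COMP M using ID uw(1) by simp
  also have "\<dots> = w" unfolding e COMP M using ID uw(2) by simp
  finally show "u = w" .
qed

lemma L_iso:
  assumes det: "a*d - b*c = 1" and r: "2*r \<le> Suc N"
  shows "isotropic_subspace n (2*r) (Fl (a,b,c,d) r)"
proof -
  let ?f = "fmp (a,b,c,d)"
  have Fl: "Fl (a,b,c,d) r = ?f ` Std N r"
    by (simp add: Fl_def Xs_def fmp_def image_comp o_def)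
  have rN: "r \<le> Suc N" using r by simp
  have sp: "Std N r = cv.span (Bas r)" using Bas_span[OF rN] by simp
  have injS: "inj_on ?f (cv.span (Bas r))"
    using fmp_inj[OF det] unfolding sp[symmetric] by (rule inj_on_subset) (auto simp: Std_def)
  have sub: "rv.subspace (Fl (a,b,c,d) r)"
    unfolding Fl by (rule cr.linear_subspace_image[OF fmp_linear Std_subspace])
  have ind: "rv.independent (?f ` Bas r)"
    using cr.linear_dependent_inj_imageD[OF fmp_linear _ injS] Bas_indep by blast
  have "Fl (a,b,c,d) r = rv.span (?f ` Bas r)"
    unfolding Fl sp cr.linear_span_image[OF fmp_linear] ..
  then have "rv.dim (Fl (a,b,c,d) r) = card (?f ` Bas r)"
    using rv.dim_span_eq_card_independent[OF ind] by simp
  also have "\<dots> = card (Bas r)"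
    by (rule card_image, rule inj_on_subset[OF injS]) (rule cv.span_superset)
  finally have dim: "rv.dim (Fl (a,b,c,d) r) = 2*r" by (simp add: Bas_card)
  have iso: "\<forall>x\<in>Fl (a,b,c,d) r. \<forall>y\<in>Fl (a,b,c,d) r. omega n x y = 0"
  proof (intro ballI)
    fix x y assume "x \<in> Fl (a,b,c,d) r" "y \<in> Fl (a,b,c,d) r"
    then obtain u w where uw: "u \<in> Xs N (a,b,c,d) r" "w \<in> Xs N (a,b,c,d) r" "x = E (T u)" "y = E (T w)"
      by (auto simp: Fl_def)
    have C: "u \<in> Cvec (Suc N)" "w \<in> Cvec (Suc N)" using Xs_CvecI uw(1,2) by auto
    have "omega n x y = omega (Suc N) (P (E (T u))) (T w)"
      unfolding uw(3,4) by (rule omEP) (use C T_R E_R in auto)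
    also have "\<dots> = Re (cc * Omega (Suc N) u w)" using PE[OF T_R[OF C(1)]] T_om[OF C] by simp
    also have "\<dots> = 0" using ISO[OF det r uw(1,2)] by simp
    finally show "omega n x y = 0" .
  qed
  show ?thesis unfolding isotropic_subspace_def using sub Fl_R dim iso by blast
qed

lemma Fl_mono: "r \<le> r' \<Longrightarrow> Fl g r \<subseteq> Fl g r'"
  unfolding Fl_def Xs_def Std_def by auto

lemma nonzero_elem:
  assumes "rv.subspace V" "rv.dim V = 2"
  shows "\<exists>v\<in>V. v \<noteq> 0"
proof (rule ccontr)
  assume "\<not> (\<exists>v\<in>V. v \<noteq> 0)"
  then have V0: "V \<subseteq> {0}" by auto
  obtain B where B: "B \<subseteq> V" "rv.independent B" "V \<subseteq> rv.span B" "card B = rv.dim V"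
    using rv.basis_exists[of V] by blast
  have "card B \<le> card {0::nat\<Rightarrow>real}" using B(1) V0 by (intro card_mono) auto
  then show False using B(4) assms(2) by simp
qed

lemma final:
  assumes n2: "n \<ge> 2" and TB: "\<forall>i\<in>Theta_even n. i \<le> Suc N"
    and LamE: "Lambda_even n T = {(\<lambda>i. if i \<in> Theta_even n then Fl g (i div 2) else {}) | g. g \<in> SL2C}"
  shows "maximally_antipodal (Iso2 n) (antipodal_Iso2 n) (Lambda_Iso2 n T)
       \<and> maximally_antipodal (F_even n) (antipodal_even n) (Lambda_even n T)"
proof -
  define \<Phi> where "\<Phi> g = (\<lambda>i. if i \<in> Theta_even n then Fl g (i div 2) else {})" for g
  have two: "2 \<in> Theta_even n" using n2 by (simp add: Theta_even_def)
  have LamE': "Lambda_even n T = \<Phi> ` SL2C" unfolding LamE \<Phi>_def by auto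
  have LamI: "Lambda_Iso2 n T = (\<lambda>g. Fl g 1) ` SL2C"
    unfolding Lambda_Iso2_def LamE' image_comp using two by (auto simp: \<Phi>_def)
  have iB: "i div 2 \<le> Suc N" "2 * (i div 2) = i" "2 * (i div 2) \<le> Suc N" if "i \<in> Theta_even n" for i
    using that TB by (auto simp: Theta_even_def)
  have one: "2 * 1 \<le> Suc N" using iB(3)[OF two] by simp
  have SLi: "g \<in> SL2C \<longleftrightarrow> (case g of (a,b,c,d) \<Rightarrow> a*d - b*c = 1)" for g
    by (cases g) (simp add: SL2C_def)
  have anti_or_same: "Fl g r = Fl h r \<or> direct_sum_full n (Fl g r) (omega_perp n (Fl h r))"
    if "g \<in> SL2C" "h \<in> SL2C" "r \<le> Suc N" for g h r
  proof -
    obtain a b c d where g: "g = (a,b,c,d)" by (cases g) auto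
    obtain a' b' c' d' where h: "h = (a',b',c',d')" by (cases h) auto
    have det: "a*d - b*c = 1" "a'*d' - b'*c' = 1" using that g h by (auto simp: SL2C_def)
    show ?thesis
    proof (cases "a*b' - a'*b = 0")
      case True then show ?thesis using L_same[OF det True] g h by simp
    next
      case False then show ?thesis using L_anti[OF det False that(3)] g h by simp
    qed
  qed
  have same_all: "Fl g r = Fl h r \<or> (\<forall>r. r \<le> Suc N \<longrightarrow> direct_sum_full n (Fl g r) (omega_perp n (Fl h r)))"
    if "g \<in> SL2C" "h \<in> SL2C" for g h r
  proof -
    obtain a b c d where g: "g = (a,b,c,d)" by (cases g) auto
    obtain a' b' c' d' where h: "h = (a',b',c',d')" by (cases h) auto
    have det: "a*d - b*c = 1" "a'*d' - b'*c' = 1" using that g h by (auto simp: SL2C_def)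
    show ?thesis
    proof (cases "a*b' - a'*b = 0")
      case True then show ?thesis using L_same[OF det True] g h by simp
    next
      case False then show ?thesis using L_anti[OF det False] g h by simp
    qed
  qed
  have iso: "isotropic_subspace n (2*r) (Fl g r)" if "g \<in> SL2C" "2*r \<le> Suc N" for g r
  proof -
    obtain a b c d where g: "g = (a,b,c,d)" by (cases g) auto
    show ?thesis using L_iso[of a d b c r] that g by (simp add: SL2C_def)
  qed
  have maxl: "\<exists>g\<in>SL2C. \<not> direct_sum_full n V (omega_perp n (Fl g 1))" if VV: "isotropic_subspace n 2 V" for V
  proof -
    have "\<exists>v\<in>V. v \<noteq> 0" using VV by (intro nonzero_elem) (auto simp: isotropic_subspace_def)
    then obtain v where v: "v \<in> V" "v \<noteq> 0" by blast
    have "V \<subseteq> Rvec (2*n)" using VV by (simp add: isotropic_subspace_def)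
    then obtain a b c d where "a*d - b*c = 1" "\<not> direct_sum_full n V (omega_perp n (Fl (a,b,c,d) 1))"
      using L_max v by blast
    then show ?thesis by (intro bexI[of _ "(a,b,c,d)"]) (auto simp: SL2C_def)
  qed
  have part1: "maximally_antipodal (Iso2 n) (antipodal_Iso2 n) (Lambda_Iso2 n T)"
    unfolding maximally_antipodal_def LamI
  proof (intro conjI ballI impI)
    show "(\<lambda>g. Fl g 1) ` SL2C \<subseteq> Iso2 n"
      using iso[OF _ one] by (auto simp: Iso2_def)
  next
    fix A B assume "A \<in> (\<lambda>g. Fl g 1) ` SL2C" "B \<in> (\<lambda>g. Fl g 1) ` SL2C" "A \<noteq> B"
    then obtain g h where gh: "g \<in> SL2C" "h \<in> SL2C" "A = Fl g 1" "B = Fl h 1" "Fl g 1 \<noteq> Fl h 1" by blast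
    have "1 \<le> Suc N" by simp
    from anti_or_same[OF gh(1,2) this] gh(5)
    have "direct_sum_full n (Fl g 1) (omega_perp n (Fl h 1))" by blast
    then show "antipodal_Iso2 n A B" using gh(3,4) by (simp add: antipodal_Iso2_def)
  next
    fix V assume "V \<in> Iso2 n"
    then show "\<exists>a\<in>(\<lambda>g. Fl g 1) ` SL2C. \<not> antipodal_Iso2 n V a"
      using maxl by (auto simp: Iso2_def antipodal_Iso2_def)
  qed
  have part2: "maximally_antipodal (F_even n) (antipodal_even n) (Lambda_even n T)"
    unfolding maximally_antipodal_def LamE'
  proof (intro conjI ballI impI)
    show "\<Phi> ` SL2C \<subseteq> F_even n"
    proof
      fix F assume "F \<in> \<Phi> ` SL2C"
      then obtain g where g: "g \<in> SL2C" "F = \<Phi> g" by blast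
      have "isotropic_subspace n i (F i)" if "i \<in> Theta_even n" for i
        using iso[OF g(1) iB(3)[OF that]] iB(2)[OF that] that by (simp add: g(2) \<Phi>_def)
      moreover have "F i \<subseteq> F j" if "i \<in> Theta_even n" "j \<in> Theta_even n" "i \<le> j" for i j
        using that by (simp add: g(2) \<Phi>_def Fl_mono div_le_mono)
      moreover have "F i = {}" if "i \<notin> Theta_even n" for i
        using that by (simp add: g(2) \<Phi>_def)
      ultimately show "F \<in> F_even n" by (simp add: F_even_def)
    qed
  next
    fix A B assume "A \<in> \<Phi> ` SL2C" "B \<in> \<Phi> ` SL2C" "A \<noteq> B"
    then obtain g h where gh: "g \<in> SL2C" "h \<in> SL2C" "A = \<Phi> g" "B = \<Phi> h" "\<Phi> g \<noteq> \<Phi> h" by blast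
    show "antipodal_even n A B"
    proof (cases "\<forall>r. Fl g r = Fl h r")
      case True
      then have "\<Phi> g = \<Phi> h" unfolding \<Phi>_def by presburger
      then show ?thesis using gh by simp
    next
      case False
      then obtain r0 where "Fl g r0 \<noteq> Fl h r0" by auto
      then have "\<forall>r. r \<le> Suc N \<longrightarrow> direct_sum_full n (Fl g r) (omega_perp n (Fl h r))"
        using same_all[OF gh(1,2), of r0] by auto
      then show ?thesis using gh iB(1) by (auto simp: antipodal_even_def \<Phi>_def)
    qed
  next
    fix F assume F: "F \<in> F_even n"
    then have "isotropic_subspace n 2 (F 2)" using two by (simp add: F_even_def)
    then obtain g where g: "g \<in> SL2C" "\<not> direct_sum_full n (F 2) (omega_perp n (Fl g 1))"
      using maxl by blast
    have "\<not> antipodal_even n F (\<Phi> g)"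
    proof
      assume "antipodal_even n F (\<Phi> g)"
      then have "direct_sum_full n (F 2) (omega_perp n (\<Phi> g 2))"
        using two unfolding antipodal_even_def by blast
      then show False using g(2) two by (simp add: \<Phi>_def)
    qed
    then show "\<exists>a\<in>\<Phi> ` SL2C. \<not> antipodal_even n F a" using g(1) by blast
  qed
  show ?thesis using part1 part2 by blast
qed

end


lemma rho_img:
  assumes "bij_betw T (Cvec m) (Rvec (2*m))" "S \<subseteq> Cvec m"
  shows "rho_even_act m T g ` T ` S = T ` sym_act m g ` S"
proof -
  have "rho_even_act m T g (T u) = T (sym_act m g u)" if "u \<in> S" for u
  proof -
    have u: "u \<in> Cvec m" using that assms(2) by auto
    then have "T u \<in> Rvec (2*m)" using assms(1) by (auto simp: bij_betw_def)
    moreover have "the_inv_into (Cvec m) T (T u) = u"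
      using assms(1) u by (intro the_inv_into_f_f) (auto simp: bij_betw_def)
    ultimately show ?thesis by (simp add: rho_even_act_def)
  qed
  then show ?thesis by (auto simp: image_iff)
qed

lemma block_img:
  assumes "n \<ge> 2" "Y \<subseteq> Rvec (2*(n-1))"
  shows "block_embed n h ` block_incl n ` Y = block_incl n ` h ` Y"
proof -
  have "block_embed n h (block_incl n y) = block_incl n (h y)" if "y \<in> Y" for y
    using that assms block_incl_R[of n y]
    by (simp add: block_embed_def block_PE block_mid_incl subset_iff)
  then show ?thesis by (auto simp: image_iff)
qed


theorem mainTheorem13:
  fixes n :: nat and c :: complex and T :: "(nat \<Rightarrow> complex) \<Rightarrow> (nat \<Rightarrow> real)"
  assumes "n \<ge> 2"
    and "symplectic_identification (2 * (n div 2)) c T"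
  shows "maximally_antipodal (Iso2 n) (antipodal_Iso2 n) (Lambda_Iso2 n T)
       \<and> maximally_antipodal (F_even n) (antipodal_even n) (Lambda_even n T)"
proof -
  define N where "N = 2*(n div 2) - 1"
  have SN: "Suc N = 2*(n div 2)" using assms(1) unfolding N_def by presburger
  have N1: "N \<ge> 1" using assms(1) unfolding N_def by presburger
  have SI: "symplectic_identification (Suc N) c T" using assms(2) SN by simp
  have TB: "\<forall>i\<in>Theta_even n. i \<le> Suc N"
    unfolding SN Theta_even_def by auto
  have StdE: "{u \<in> Cvec (2*(n div 2)). \<forall>j\<ge>i div 2. u j = 0} = Std N (i div 2)" for i
    by (simp add: Std_def SN)
  have bij: "bij_betw T (Cvec (Suc N)) (Rvec (2*Suc N))" using SI by (simp add: symplectic_identification_def)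
  have StdC: "Std N r \<subseteq> Cvec (Suc N)" for r by (auto simp: Std_def)
  have TStdR: "T ` Std N r \<subseteq> Rvec (2*Suc N)" for r
    using StdC bij by (auto simp: bij_betw_def)
  show ?thesis
  proof (cases "even n")
    case True
    have nN: "n = Suc N" using True SN by presburger
    interpret R: RS n N c T "\<lambda>x. x" "\<lambda>x. x"
      by unfold_locales (use N1 SI nN in auto)
    have LamE: "Lambda_even n T = {(\<lambda>i. if i \<in> Theta_even n then R.Fl g (i div 2) else {}) | g. g \<in> SL2C}"
    proof -
      have "(\<lambda>i. rho_act n T g ` xi0 n T i) = (\<lambda>i. if i \<in> Theta_even n then R.Fl g (i div 2) else {})" for g
      proof
        fix i
        show "rho_act n T g ` xi0 n T i = (if i \<in> Theta_even n then R.Fl g (i div 2) else {})"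
        proof (cases "i \<in> Theta_even n")
          case False thus ?thesis by (simp add: xi0_def)
        next
          case iT: True
          have StdE2: "{u \<in> Cvec n. \<forall>j\<ge>i div 2. u j = 0} = Std N (i div 2)"
            using nN by (simp add: Std_def)
          have "xi0 n T i = T ` Std N (i div 2)" using iT True by (simp add: xi0_def StdE StdE2)
          moreover have "rho_act n T g = rho_even_act (Suc N) T g" using True nN by (simp add: rho_act_def)
          ultimately have "rho_act n T g ` xi0 n T i = T ` sym_act (Suc N) g ` Std N (i div 2)"
            using rho_img[OF bij StdC] by simp
          then show ?thesis using iT by (simp add: R.Fl_def Xs_def)
        qed
      qed
      then show ?thesis by (simp add: Lambda_even_def)
    qed
    show ?thesis by (rule R.final[OF assms(1) TB LamE])
  next
    case False
    have nN: "n = Suc (Suc N)" using False SN by presburger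
    have n1: "n - 1 = Suc N" using nN by simp
    interpret R: RS n N c T "block_incl n" "block_proj n"
    proof unfold_locales
      show "N \<ge> 1" by (rule N1)
      show "symplectic_identification (Suc N) c T" by (rule SI)
      show "block_incl n (x + y) = block_incl n x + block_incl n y" for x y by (rule block_incl_add)
      show "block_incl n (rscale r x) = rscale r (block_incl n x)" for r x by (rule block_incl_scale)
      show "block_proj n (x + y) = block_proj n x + block_proj n y" for x y by (rule block_proj_add)
      show "block_incl n x \<in> Rvec (2 * n)" for x by (rule block_incl_R)
      show "block_proj n (block_incl n x) = x" if "x \<in> Rvec (2 * Suc N)" for x
        using that assms(1) n1 by (intro block_PE) auto
      show "block_proj n x \<in> Rvec (2 * Suc N)" for x
        using block_proj_R[of n x] assms(1) n1 by auto
      show "omega n x (block_incl n y) = omega (Suc N) (block_proj n x) y" for x y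
        using block_omega[of "Suc N" x y] nN by simp
    qed
    have LamE: "Lambda_even n T = {(\<lambda>i. if i \<in> Theta_even n then R.Fl g (i div 2) else {}) | g. g \<in> SL2C}"
    proof -
      have "(\<lambda>i. rho_act n T g ` xi0 n T i) = (\<lambda>i. if i \<in> Theta_even n then R.Fl g (i div 2) else {})" for g
      proof
        fix i
        show "rho_act n T g ` xi0 n T i = (if i \<in> Theta_even n then R.Fl g (i div 2) else {})"
        proof (cases "i \<in> Theta_even n")
          case False thus ?thesis by (simp add: xi0_def)
        next
          case iT: True
          have StdE2: "{u \<in> Cvec (n - Suc 0). \<forall>j\<ge>i div 2. u j = 0} = Std N (i div 2)"
            using nN by (simp add: Std_def)
          have "xi0 n T i = block_incl n ` T ` Std N (i div 2)" using iT False by (simp add: xi0_def StdE StdE2)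
          moreover have "rho_act n T g = block_embed n (rho_even_act (Suc N) T g)"
            using False n1 by (simp add: rho_act_def)
          ultimately have "rho_act n T g ` xi0 n T i = block_incl n ` rho_even_act (Suc N) T g ` T ` Std N (i div 2)"
            using block_img[OF assms(1), of "T ` Std N (i div 2)"] TStdR n1 by simp
          also have "\<dots> = block_incl n ` T ` sym_act (Suc N) g ` Std N (i div 2)"
            using rho_img[OF bij StdC] by simp
          finally show ?thesis using iT by (simp add: R.Fl_def Xs_def)
        qed
      qed
      then show ?thesis by (simp add: Lambda_even_def)
    qed
    show ?thesis by (rule R.final[OF assms(1) TB LamE])
  qed
qed

end
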